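(* Suppose $(\Omega,\mathcal{A},\mathbf{P})$ is complete. Let $X$ be a random measurable set of $\mathbb{R}$ that has a.s. locally finite perimeter. Then there exists a random closed set $Z\subset\mathbb{R}$ such that for $\mathbf{P}$-almost all $\omega$ and all $a<b\in\mathbb{R}$, $\mathcal{L}^1(X(\omega)\Delta Z(\omega))=0$ and ${\operatorname{Per}}(X(\omega);(a,b))=\mathcal{H}^0(\partial Z(\omega)\cap(a,b))$.
   Context: A random measurable set is a measurable map from $\Omega$ into the space of Lebesgue classes of measurable subsets of $\mathbb{R}$ with the Borel $\sigma$-algebra of local convergence in measure. For open $U\subset\mathbb{R}$, ${\operatorname{Per}}(A;U)=\sup\{\int_U\mathbb{1}_A\varphi'\,dx:\varphi\in C^1_c(U),|\varphi|\le1\}$; $X$ has a.s. locally finite perimeter if a.s. ${\operatorname{Per}}(X;V)<\infty$ for all bounded open $V$. A random closed set is a map $Z$ into closed subsets of $\mathbb{R}$ with $\{Z\cap K\ne\emptyset\}\in\mathcal{A}$ for all compact $K$. $\mathcal{H}^0$ is counting measure; $\partial Z$ is the topological boundary. *)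

theory Defs
  imports "HOL-Analysis.Analysis" "HOL-Probability.Probability"
begin

text \<open>Topology of local convergence in measure on Lebesgue measurable subsets of the reals
  (identified with their indicators): a family U of Lebesgue measurable sets is open iff for
  every A in U there are n and e > 0 such that every Lebesgue measurable B with
  Leb((A sym-diff B) inter [-n,n]) < e lies in U.  Borel sets of this (pseudo-metrisable)
  topology are saturated under a.e. equality, so this is the Borel sigma-algebra on
  Lebesgue classes pulled back to representatives.\<close>

definition loc_meas_open :: "real set set \<Rightarrow> bool" where
  "loc_meas_open U \<longleftrightarrow> U \<subseteq> sets lebesgue \<and>
     (\<forall>A\<in>U. \<exists>n::nat. \<exists>e>0. \<forall>B\<in>sets lebesgue.
        emeasure lebesgue (((A - B) \<union> (B - A)) \<inter> {- real n .. real n}) < ennreal e \<longrightarrow> B \<in> U)"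

definition loc_meas_space :: "real set measure" where
  "loc_meas_space = sigma (sets lebesgue) {U. loc_meas_open U}"

definition random_measurable_set :: "'a measure \<Rightarrow> ('a \<Rightarrow> real set) \<Rightarrow> bool" where
  "random_measurable_set M X \<longleftrightarrow> X \<in> M \<rightarrow>\<^sub>M loc_meas_space"

definition C1c_unit :: "real set \<Rightarrow> (real \<Rightarrow> real) set" where
  "C1c_unit U = {\<phi>. \<phi> C1_differentiable_on UNIV \<and>
      compact (closure {x. \<phi> x \<noteq> 0}) \<and> closure {x. \<phi> x \<noteq> 0} \<subseteq> U \<and>
      (\<forall>x. \<bar>\<phi> x\<bar> \<le> 1)}"

definition Per :: "real set \<Rightarrow> real set \<Rightarrow> ereal" where
  "Per A U = (SUP \<phi>\<in>C1c_unit U.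
      ereal (LINT x|lebesgue. indicator (A \<inter> U) x * deriv \<phi> x))"

definition random_closed_set :: "'a measure \<Rightarrow> ('a \<Rightarrow> real set) \<Rightarrow> bool" where
  "random_closed_set M Z \<longleftrightarrow> (\<forall>\<omega>\<in>space M. closed (Z \<omega>)) \<and>
     (\<forall>K. compact K \<longrightarrow> {\<omega>\<in>space M. Z \<omega> \<inter> K \<noteq> {}} \<in> sets M)"

end

theory Submission
  imports Defs
begin

definition sstep :: "real \<Rightarrow> real" where
  "sstep t = (if t \<le> 0 then 0 else if 1 \<le> t then 1 else 3*t^2 - 2*t^3)"
definition dsstep :: "real \<Rightarrow> real" where
  "dsstep t = (if t \<le> 0 then 0 else if 1 \<le> t then 0 else 6*t - 6*t^2)"

lemma poly_deriv: "((\<lambda>t::real. 3*t^2 - 2*t^3) has_real_derivative (6*t - 6*t^2)) (at t within S)"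
  by (auto intro!: derivative_eq_intros simp: power2_eq_square)

lemma glue_deriv:
  assumes "(f has_real_derivative D) (at (a::real) within {..a})"
      and "(f has_real_derivative D) (at a within {a..})"
  shows "(f has_real_derivative D) (at a)"
proof -
  have "(f has_real_derivative D) (at a within ({..a} \<union> {a..}))"
    using assms unfolding has_field_derivative_iff by (rule Lim_Un)
  moreover have "{..a} \<union> {a..} = (UNIV::real set)" by auto
  ultimately show ?thesis by simp
qed

lemma sstep_deriv: "(sstep has_real_derivative dsstep t) (at t)"
proof -
  consider "t < 0" | "t = 0" | "0 < t \<and> t < 1" | "t = 1" | "1 < t" by linarith
  then show ?thesis
  proof cases
    case 1
    show ?thesis
      by (rule has_field_derivative_transform_within_open[of "\<lambda>_. 0" _ _ "{..<0}"])
         (use 1 in \<open>auto simp: sstep_def dsstep_def\<close>)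
  next
    case 2
    show ?thesis
    proof (rule glue_deriv)
      show "(sstep has_real_derivative dsstep t) (at t within {..t})"
        by (rule has_field_derivative_transform_within[of "\<lambda>_. 0" _ _ _ 1])
           (use 2 in \<open>auto simp: sstep_def dsstep_def\<close>)
      show "(sstep has_real_derivative dsstep t) (at t within {t..})"
        using has_field_derivative_transform_within[OF poly_deriv[of 0 "{0..}"], of 1 sstep] 2
        by (auto simp: sstep_def dsstep_def dist_real_def)
    qed
  next
    case 3
    show ?thesis
      using has_field_derivative_transform_within_open[OF poly_deriv[of t UNIV], of "{0<..<1}" sstep] 3
      by (auto simp: sstep_def dsstep_def)
  next
    case 4
    show ?thesis
    proof (rule glue_deriv)
      show "(sstep has_real_derivative dsstep t) (at t within {t..})"
        by (rule has_field_derivative_transform_within[of "\<lambda>_. 1" _ _ _ 1])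
           (use 4 in \<open>auto simp: sstep_def dsstep_def\<close>)
      show "(sstep has_real_derivative dsstep t) (at t within {..t})"
        using has_field_derivative_transform_within[OF poly_deriv[of 1 "{..1}"], of 1 sstep] 4
        by (auto simp: sstep_def dsstep_def dist_real_def)
    qed
  next
    case 5
    show ?thesis
      by (rule has_field_derivative_transform_within_open[of "\<lambda>_. 1" _ _ "{1<..}"])
         (use 5 in \<open>auto simp: sstep_def dsstep_def\<close>)
  qed
qed

lemma dsstep_cont: "continuous_on UNIV dsstep"
proof -
  have eq: "dsstep = (\<lambda>t. max 0 (6 * (max 0 (min 1 t)) - 6 * (max 0 (min 1 t))^2))"
  proof
    fix t :: real
    show "dsstep t = max 0 (6 * (max 0 (min 1 t)) - 6 * (max 0 (min 1 t))^2)"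
    proof (cases "t \<le> 0 \<or> 1 \<le> t")
      case True then show ?thesis by (auto simp: dsstep_def power2_eq_square)
    next
      case False
      then have "0 \<le> 6*t - 6*t^2" by (simp add: power2_eq_square mult_nonneg_nonneg)
      then show ?thesis using False by (auto simp: dsstep_def)
    qed
  qed
  show ?thesis by (subst eq) (intro continuous_intros)
qed

lemma sstep_bounds: "0 \<le> sstep t" "sstep t \<le> 1"
proof -
  have "0 \<le> 3*t^2 - 2*t^3 \<and> 3*t^2 - 2*t^3 \<le> 1" if "0 < t" "t < 1"
  proof -
    have "3*t^2 - 2*t^3 = t^2 * (3 - 2*t)" by (simp add: algebra_simps power2_eq_square power3_eq_cube)
    moreover have "1 - (3*t^2 - 2*t^3) = (1 - t)^2 * (1 + 2*t)" by (simp add: algebra_simps power2_eq_square power3_eq_cube)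
    ultimately show ?thesis using that by (smt (verit) mult_nonneg_nonneg zero_le_power2)
  qed
  then show "0 \<le> sstep t" "sstep t \<le> 1" by (auto simp: sstep_def)
qed

lemma dsstep_bounds: "0 \<le> dsstep t" "dsstep t \<le> 3/2"
proof -
  have "0 \<le> 6*t - 6*t^2 \<and> 6*t - 6*t^2 \<le> 3/2" if "0 < t" "t < 1"
  proof -
    have "3/2 - (6*t - 6*t^2) = 6*(t - 1/2)^2" by (simp add: algebra_simps power2_eq_square)
    moreover have "6*t - 6*t^2 = 6*t*(1-t)" by (simp add: algebra_simps power2_eq_square)
    ultimately show ?thesis using that by (smt (verit) mult_nonneg_nonneg zero_le_power2)
  qed
  then show "0 \<le> dsstep t" "dsstep t \<le> 3/2" by (auto simp: dsstep_def)
qed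

lemma C1c_D:
  assumes "\<phi> \<in> C1c_unit U"
  obtains D where "\<And>x. (\<phi> has_real_derivative D x) (at x)" "continuous_on UNIV D"
    "\<And>x. deriv \<phi> x = D x"
proof -
  from assms obtain D where D: "\<forall>x\<in>UNIV. (\<phi> has_vector_derivative D x) (at x)" and c: "continuous_on UNIV D"
    unfolding C1c_unit_def C1_differentiable_on_def by blast
  have d: "(\<phi> has_real_derivative D x) (at x)" for x
    using D by (simp add: has_real_derivative_iff_has_vector_derivative)
  show ?thesis
    by (rule that[OF d c]) (rule DERIV_imp_deriv[OF d])
qed

lemma deriv_zero_outside:
  assumes "x \<notin> closure {x. \<phi> x \<noteq> (0::real)}"
  shows "deriv \<phi> x = 0"
proof -
  let ?C = "closure {x. \<phi> x \<noteq> 0}"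
  have o: "open (- ?C)" by (simp add: open_Compl)
  have z: "\<phi> y = 0" if "y \<in> - ?C" for y
    using that closure_subset[of "{x. \<phi> x \<noteq> 0}"] by auto
  have x: "x \<in> - ?C" using assms by simp
  have "(\<phi> has_real_derivative 0) (at x)"
  proof (rule has_field_derivative_transform_within_open[OF _ o x, of "\<lambda>_. 0"])
    show "((\<lambda>_. 0) has_real_derivative 0) (at x)" by (rule DERIV_const)
    fix y assume "y \<in> - ?C" then show "0 = \<phi> y" using z by metis
  qed
  then show ?thesis by (simp add: DERIV_imp_deriv)
qed
lemma C1c_intro:
  fixes \<phi> :: "real \<Rightarrow> real"
  assumes "\<And>x. (\<phi> has_real_derivative D x) (at x)" "continuous_on UNIV D"
    and "\<And>x. x \<notin> {l..u} \<Longrightarrow> \<phi> x = 0" "{l..u} \<subseteq> U" "\<And>x. \<bar>\<phi> x\<bar> \<le> 1"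
  shows "\<phi> \<in> C1c_unit U"
proof -
  have sub: "{x. \<phi> x \<noteq> 0} \<subseteq> {l..u}" using assms(3) by blast
  then have cl: "closure {x. \<phi> x \<noteq> 0} \<subseteq> {l..u}" by (simp add: closure_minimal)
  have "bounded {x. \<phi> x \<noteq> 0}" by (rule bounded_subset[OF _ sub]) simp
  then have "compact (closure {x. \<phi> x \<noteq> 0})" by simp
  moreover have "\<phi> C1_differentiable_on UNIV"
    unfolding C1_differentiable_on_def
  proof (intro exI conjI ballI)
    show "(\<phi> has_vector_derivative D x) (at x)" for x
      using assms(1)[of x] by (simp add: has_real_derivative_iff_has_vector_derivative)
  qed (rule assms(2))
  ultimately show ?thesis unfolding C1c_unit_def mem_Collect_eq
    using cl assms(4,5) by (intro conjI) auto
qed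

lemma integrable_ind_cont:
  fixes g :: "real \<Rightarrow> real"
  assumes E: "E \<in> sets lebesgue" and g: "continuous_on UNIV g" and z: "\<And>x. x \<notin> {l..u} \<Longrightarrow> g x = 0"
  shows "integrable lebesgue (\<lambda>x. indicator E x * g x)"
proof (rule Bochner_Integration.integrable_bound)
  have "integrable lborel (\<lambda>x. indicator {l..u} x *\<^sub>R \<bar>g x\<bar>)"
    by (rule borel_integrable_compact) (auto intro!: continuous_intros continuous_on_subset[OF g])
  then have "integrable lborel (\<lambda>x. \<bar>g x\<bar>)"
  proof (rule Bochner_Integration.integrable_cong[THEN iffD1, rotated -1])
    fix x show "indicator {l..u} x *\<^sub>R \<bar>g x\<bar> = \<bar>g x\<bar>"
      using z[of x] by (cases "x \<in> {l..u}") auto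
  qed simp
  moreover have "(\<lambda>x. \<bar>g x\<bar>) \<in> borel_measurable borel"
    using g by (intro borel_measurable_continuous_onI continuous_intros)
  ultimately show "integrable lebesgue (\<lambda>x. \<bar>g x\<bar>)"
    by (simp add: integrable_completion)
  have "g \<in> borel_measurable lebesgue"
    using borel_measurable_continuous_onI[OF g] by (simp add: measurable_completion)
  then show "(\<lambda>x. indicator E x * g x) \<in> borel_measurable lebesgue"
    using E by (intro borel_measurable_times borel_measurable_indicator) auto
  show "AE x in lebesgue. norm (indicator E x * g x) \<le> norm \<bar>g x\<bar>"
    by (auto simp: indicator_def)
qed

lemma FTC_leb:
  fixes f :: "real \<Rightarrow> real"
  assumes d: "\<And>x. (f has_real_derivative f' x) (at x)" and c: "continuous_on UNIV f'" and "u \<le> v"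
  shows "(LINT x|lebesgue. indicator {u<..<v} x * f' x) = f v - f u"
proof -
  have cm: "f' \<in> borel_measurable borel" using borel_measurable_continuous_onI[OF c] .
  have m: "(\<lambda>x. indicator {u<..<v} x * f' x) \<in> borel_measurable borel"
    by (intro borel_measurable_times cm borel_measurable_indicator) auto
  have m2: "(\<lambda>x. indicator {u..v} x *\<^sub>R f' x) \<in> borel_measurable borel"
    by (intro borel_measurable_scaleR cm borel_measurable_indicator) auto
  have "(LINT x|lebesgue. indicator {u<..<v} x * f' x) = (LINT x|lborel. indicator {u<..<v} x * f' x)"
    using m by (simp add: integral_completion)
  also have "\<dots> = (LINT x|lborel. indicator {u..v} x *\<^sub>R f' x)"
  proof (rule integral_cong_AE)
    show "AE x in lborel. indicator {u<..<v} x * f' x = indicator {u..v} x *\<^sub>R f' x"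
      using AE_lborel_singleton[of u] AE_lborel_singleton[of v]
      by eventually_elim (auto simp: indicator_def)
  qed (use m m2 in auto)
  also have "\<dots> = f v - f u"
    using assms continuous_on_subset[OF c, of "{u..v}"]
    by (intro integral_FTC_atLeastAtMost)
       (auto intro: has_field_derivative_at_within
             simp: has_real_derivative_iff_has_vector_derivative[symmetric])
  finally show ?thesis .
qed

definition tr :: "real \<Rightarrow> real \<Rightarrow> real \<Rightarrow> real" where
  "tr x0 d x = sstep ((x - x0 + d) / (2*d))"
definition dtr :: "real \<Rightarrow> real \<Rightarrow> real \<Rightarrow> real" where
  "dtr x0 d x = dsstep ((x - x0 + d) / (2*d)) * (1 / (2*d))"

lemma tr_deriv: assumes "d > 0" shows "(tr x0 d has_real_derivative dtr x0 d x) (at x)"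
proof -
  have "((\<lambda>x. (x - x0 + d) / (2*d)) has_real_derivative 1 / (2*d)) (at x)"
    using assms by (auto intro!: derivative_eq_intros)
  from DERIV_chain[OF sstep_deriv this] show ?thesis
    by (simp add: tr_def[abs_def] dtr_def o_def)
qed

lemma dtr_cont: assumes "d > 0" shows "continuous_on UNIV (dtr x0 d)"
  unfolding dtr_def using assms
  by (intro continuous_intros continuous_on_compose2[OF dsstep_cont]) auto

lemma dtr_zero: assumes "d > 0" "x \<notin> {x0-d<..<x0+d}" shows "dtr x0 d x = 0"
proof -
  have "(x - x0 + d) / (2*d) \<le> 0 \<or> 1 \<le> (x - x0 + d) / (2*d)"
    using assms by (auto simp: field_simps)
  then show ?thesis by (auto simp: dtr_def dsstep_def)
qed

lemma tr_left: assumes "d > 0" "x \<le> x0 - d" shows "tr x0 d x = 0"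
proof -
  have "(x - x0 + d) / (2*d) \<le> 0" using assms by (auto simp: field_simps)
  then show ?thesis by (auto simp: tr_def sstep_def)
qed

lemma tr_right: assumes "d > 0" "x0 + d \<le> x" shows "tr x0 d x = 1"
proof -
  have "1 \<le> (x - x0 + d) / (2*d)" using assms by (auto simp: field_simps)
  then show ?thesis by (auto simp: tr_def sstep_def)
qed

lemma tr_bounds: "0 \<le> tr x0 d x" "tr x0 d x \<le> 1"
  by (auto simp: tr_def sstep_bounds)

lemma dtr_bounds: assumes "d > 0" shows "0 \<le> dtr x0 d x" "dtr x0 d x \<le> 3 / (4*d)"
proof -
  have "dsstep ((x - x0 + d) / (2*d)) * (1 / (2*d)) \<le> 3/2 * (1 / (2*d))"
    using assms dsstep_bounds by (intro mult_right_mono) auto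
  then show "dtr x0 d x \<le> 3 / (4*d)" by (simp add: dtr_def)
  show "0 \<le> dtr x0 d x" using assms dsstep_bounds by (simp add: dtr_def)
qed

lemma dtr_ind_eq: assumes "d > 0"
  shows "indicator S x * dtr x0 d x = indicator (S \<inter> ball x0 d) x * dtr x0 d x"
  using dtr_zero[OF assms, of x x0] by (auto simp: indicator_def ball_eq_greaterThanLessThan)

lemma integrable_dtr: assumes "d > 0" "S \<in> sets lebesgue"
  shows "integrable lebesgue (\<lambda>x. indicator S x * dtr x0 d x)"
  using assms
  by (intro integrable_ind_cont[where l="x0-d" and u="x0+d"] dtr_cont) (auto intro!: dtr_zero)

lemma integral_dtr_full: assumes "d > 0"
  shows "(LINT x|lebesgue. indicator {x0-d<..<x0+d} x * dtr x0 d x) = 1"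
proof -
  have "(LINT x|lebesgue. indicator {x0-d<..<x0+d} x * dtr x0 d x) = tr x0 d (x0+d) - tr x0 d (x0-d)"
    using assms by (intro FTC_leb tr_deriv dtr_cont) auto
  then show ?thesis using assms tr_left tr_right by simp
qed

lemma integral_dtr_le: assumes "d > 0" "S \<in> sets lebesgue"
  shows "(LINT x|lebesgue. indicator S x * dtr x0 d x) \<le> 3 / (4*d) * measure lebesgue (S \<inter> ball x0 d)"
proof -
  have B: "ball x0 d = {x0-d<..<x0+d}" by (simp add: ball_eq_greaterThanLessThan)
  have SB: "S \<inter> ball x0 d \<in> lmeasurable"
    using fmeasurable_Int_fmeasurable[OF lmeasurable_ball[of x0 d] assms(2)] by (simp add: Int_commute)
  have SB1: "S \<inter> ball x0 d \<in> sets lebesgue" and SB2: "emeasure lebesgue (S \<inter> ball x0 d) < \<infinity>"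
    using SB unfolding fmeasurable_def by blast+
  have I: "integrable lebesgue (\<lambda>x. indicator (S \<inter> ball x0 d) x *\<^sub>R (3 / (4*d)))"
    by (rule integrable_indicator[OF SB1 SB2])
  have I2: "integrable lebesgue (\<lambda>x. indicator (S \<inter> ball x0 d) x * dtr x0 d x)"
    using assms SB1 by (intro integrable_dtr) auto
  have "(LINT x|lebesgue. indicator S x * dtr x0 d x)
        = (LINT x|lebesgue. indicator (S \<inter> ball x0 d) x * dtr x0 d x)"
    by (rule Bochner_Integration.integral_cong[OF refl]) (rule dtr_ind_eq[OF assms(1)])
  also have "\<dots> \<le> (LINT x|lebesgue. indicator (S \<inter> ball x0 d) x *\<^sub>R (3 / (4*d)))"
  proof (rule integral_mono[OF I2 I])
    fix x show "indicator (S \<inter> ball x0 d) x * dtr x0 d x \<le> indicator (S \<inter> ball x0 d) x *\<^sub>R (3 / (4*d))"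
      using dtr_bounds[OF assms(1), of x0 x] by (auto simp: indicator_def)
  qed
  also have "\<dots> = measure lebesgue (S \<inter> ball x0 d) * (3 / (4*d))"
    by (simp only: real_scaleR_def integral_mult_left_zero Bochner_Integration.integral_indicator space_completion space_lborel space_borel Int_UNIV_right)
  also have "\<dots> = 3 / (4*d) * measure lebesgue (S \<inter> ball x0 d)" by simp
  finally show ?thesis .
qed

lemma integral_dtr_ge: assumes "d > 0" "S \<in> sets lebesgue"
  shows "1 - 3 / (4*d) * measure lebesgue (ball x0 d - S) \<le> (LINT x|lebesgue. indicator S x * dtr x0 d x)"
proof -
  have B: "ball x0 d = {x0-d<..<x0+d}" by (simp add: ball_eq_greaterThanLessThan)
  have m: "ball x0 d - S \<in> sets lebesgue" using assms by auto
  have eq: "indicator S x * dtr x0 d x = indicator {x0-d<..<x0+d} x * dtr x0 d x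
             - indicator (ball x0 d - S) x * dtr x0 d x" for x
    using dtr_zero[OF assms(1), of x x0] by (auto simp: indicator_def B)
  have "(LINT x|lebesgue. indicator S x * dtr x0 d x) =
        (LINT x|lebesgue. indicator {x0-d<..<x0+d} x * dtr x0 d x) -
        (LINT x|lebesgue. indicator (ball x0 d - S) x * dtr x0 d x)"
    unfolding eq using assms m by (intro Bochner_Integration.integral_diff integrable_dtr) auto
  also have "\<dots> = 1 - (LINT x|lebesgue. indicator (ball x0 d - S) x * dtr x0 d x)"
    using integral_dtr_full[OF assms(1)] by simp
  finally have e: "(LINT x|lebesgue. indicator S x * dtr x0 d x) =
       1 - (LINT x|lebesgue. indicator (ball x0 d - S) x * dtr x0 d x)" .
  have "(LINT x|lebesgue. indicator (ball x0 d - S) x * dtr x0 d x) \<le>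
        3 / (4*d) * measure lebesgue ((ball x0 d - S) \<inter> ball x0 d)"
    using integral_dtr_le[OF assms(1) m] .
  moreover have "(ball x0 d - S) \<inter> ball x0 d = ball x0 d - S" by auto
  ultimately show ?thesis using e by simp
qed

lemma zero_C1c: "(\<lambda>_. 0) \<in> C1c_unit U"
  by (rule C1c_intro[where D="\<lambda>_. 0" and l=1 and u=0]) (auto intro: DERIV_const)

lemma Per_ge: "\<phi> \<in> C1c_unit U \<Longrightarrow> ereal (LINT x|lebesgue. indicator (A \<inter> U) x * deriv \<phi> x) \<le> Per A U"
  unfolding Per_def by (rule SUP_upper)

lemma Per_le: "(\<And>\<phi>. \<phi> \<in> C1c_unit U \<Longrightarrow> ereal (LINT x|lebesgue. indicator (A \<inter> U) x * deriv \<phi> x) \<le> c) \<Longrightarrow> Per A U \<le> c"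
  unfolding Per_def by (rule SUP_least)

lemma Per_nonneg: "0 \<le> Per A U"
proof -
  have "ereal (LINT x|lebesgue. indicator (A \<inter> U) x * deriv (\<lambda>_. 0) x) \<le> Per A U"
    by (rule Per_ge[OF zero_C1c])
  then show ?thesis by (simp add: zero_ereal_def)
qed

definition goodpt :: "real set \<Rightarrow> real \<Rightarrow> bool" where
  "goodpt A x \<longleftrightarrow> (\<forall>e>0. \<forall>r>0. \<exists>d. 0 < d \<and> d \<le> r \<and> measure lebesgue (ball x d - A) < e * d)"

lemma Per_pair:
  assumes A: "A \<in> sets lebesgue" and gb: "goodpt A b" and gc: "goodpt (- A) c"
    and pq: "p < b" "b < q" "p < c" "c < q"
  shows "1 \<le> Per A {p<..<q}"
proof (rule ereal_le_epsilon2)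
  fix \<epsilon> :: real assume "0 < \<epsilon>"
  define e where "e = \<epsilon> / 2"
  have e: "e > 0" using \<open>0 < \<epsilon>\<close> by (simp add: e_def)
  define r where "r = min (min (b-p) (q-b)) (min (c-p) (q-c)) / 2"
  have r: "r > 0" using pq by (simp add: r_def)
  obtain d1 where d1: "0 < d1" "d1 \<le> r" "measure lebesgue (ball b d1 - A) < e * d1"
    using gb e r unfolding goodpt_def by blast
  obtain d2 where d2: "0 < d2" "d2 \<le> r" "measure lebesgue (ball c d2 - (- A)) < e * d2"
    using gc e r unfolding goodpt_def by blast
  define \<phi> where "\<phi> = (\<lambda>x. tr b d1 x - tr c d2 x)"
  define D where "D = (\<lambda>x. dtr b d1 x - dtr c d2 x)"
  have dphi: "(\<phi> has_real_derivative D x) (at x)" for x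
    unfolding \<phi>_def D_def using d1(1) d2(1) by (intro DERIV_diff tr_deriv)
  have cD: "continuous_on UNIV D"
    unfolding D_def using d1(1) d2(1) by (intro continuous_on_diff dtr_cont)
  have phiC: "\<phi> \<in> C1c_unit {p<..<q}"
  proof (rule C1c_intro[OF dphi cD, where l="min (b-d1) (c-d2)" and u="max (b+d1) (c+d2)"])
    fix x assume "x \<notin> {min (b-d1) (c-d2)..max (b+d1) (c+d2)}"
    then have "x < min (b-d1) (c-d2) \<or> max (b+d1) (c+d2) < x" by auto
    then show "\<phi> x = 0"
    proof
      assume "x < min (b-d1) (c-d2)"
      then show ?thesis unfolding \<phi>_def using tr_left[OF d1(1), of x b] tr_left[OF d2(1), of x c] by simp
    next
      assume "max (b+d1) (c+d2) < x"
      then show ?thesis unfolding \<phi>_def using tr_right[OF d1(1), of b x] tr_right[OF d2(1), of c x] by simp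
    qed
  next
    show "{min (b-d1) (c-d2)..max (b+d1) (c+d2)} \<subseteq> {p<..<q}"
      using d1 d2 pq unfolding r_def by auto
  next
    fix x show "\<bar>\<phi> x\<bar> \<le> 1"
      unfolding \<phi>_def using tr_bounds[of b d1 x] tr_bounds[of c d2 x] by auto
  qed
  have derivphi: "deriv \<phi> x = D x" for x using dphi by (rule DERIV_imp_deriv)
  have ptw: "indicator (A \<inter> {p<..<q}) x * deriv \<phi> x = indicator A x * dtr b d1 x - indicator A x * dtr c d2 x" for x
  proof (cases "x \<in> {p<..<q}")
    case True then show ?thesis by (simp add: derivphi D_def indicator_def algebra_simps)
  next
    case False
    then have "x \<notin> {b-d1<..<b+d1}" "x \<notin> {c-d2<..<c+d2}" using d1 d2 pq unfolding r_def by auto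
    then show ?thesis using dtr_zero[OF d1(1)] dtr_zero[OF d2(1)] False
      by (simp add: derivphi D_def indicator_def)
  qed
  have int: "(LINT x|lebesgue. indicator (A \<inter> {p<..<q}) x * deriv \<phi> x)
      = (LINT x|lebesgue. indicator A x * dtr b d1 x) - (LINT x|lebesgue. indicator A x * dtr c d2 x)"
    unfolding ptw using A d1(1) d2(1) by (intro Bochner_Integration.integral_diff integrable_dtr)
  have i1: "1 - 3 / (4*d1) * measure lebesgue (ball b d1 - A) \<le> (LINT x|lebesgue. indicator A x * dtr b d1 x)"
    by (rule integral_dtr_ge[OF d1(1) A])
  have i2: "(LINT x|lebesgue. indicator A x * dtr c d2 x) \<le> 3 / (4*d2) * measure lebesgue (A \<inter> ball c d2)"
    by (rule integral_dtr_le[OF d2(1) A])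
  have "ball c d2 - (- A) = A \<inter> ball c d2" by auto
  then have m2: "measure lebesgue (A \<inter> ball c d2) < e * d2" using d2(3) by simp
  have b1: "3 / (4*d1) * measure lebesgue (ball b d1 - A) \<le> 3/4 * e"
  proof -
    have "3 / (4*d1) * measure lebesgue (ball b d1 - A) \<le> 3 / (4*d1) * (e * d1)"
      using d1 by (intro mult_left_mono) auto
    also have "\<dots> = 3/4 * e" using d1(1) by (simp add: field_simps)
    finally show ?thesis .
  qed
  have b2: "3 / (4*d2) * measure lebesgue (A \<inter> ball c d2) \<le> 3/4 * e"
  proof -
    have "3 / (4*d2) * measure lebesgue (A \<inter> ball c d2) \<le> 3 / (4*d2) * (e * d2)"
      using d2 m2 by (intro mult_left_mono) auto
    also have "\<dots> = 3/4 * e" using d2(1) by (simp add: field_simps)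
    finally show ?thesis .
  qed
  have "1 - \<epsilon> \<le> (LINT x|lebesgue. indicator (A \<inter> {p<..<q}) x * deriv \<phi> x)"
    using int i1 i2 b1 b2 \<open>0 < \<epsilon>\<close> unfolding e_def by linarith
  then have "ereal 1 \<le> ereal (LINT x|lebesgue. indicator (A \<inter> {p<..<q}) x * deriv \<phi> x) + ereal \<epsilon>"
    by simp
  also have "\<dots> \<le> Per A {p<..<q} + ereal \<epsilon>"
    by (intro add_right_mono Per_ge phiC)
  finally show "1 \<le> Per A {p<..<q} + ereal \<epsilon>" by (simp add: one_ereal_def)
qed

lemma measure_ball_real: assumes "(d::real) \<ge> 0" shows "measure lebesgue (ball (x::real) d) = 2 * d"
proof -
  have "measure lebesgue (ball x d) = measure lborel {x-d<..<x+d}"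
    by (simp add: ball_eq_greaterThanLessThan measure_completion)
  also have "\<dots> = 2 * d" using assms by (simp add: measure_def)
  finally show ?thesis .
qed

lemma density_key:
  fixes A S :: "real set"
  assumes A: "A \<in> sets lebesgue" and eps: "\<epsilon> > 0" and S: "S \<subseteq> A \<inter> ball z R"
    and big: "\<And>x. x \<in> S \<Longrightarrow> \<exists>r>0. \<forall>d. 0 < d \<and> d \<le> r \<longrightarrow> \<epsilon> * d \<le> measure lebesgue (ball x d - A)"
  shows "negligible S"
  unfolding negligible_outer_le
proof (intro allI impI)
  fix \<eta> :: real assume "\<eta> > 0"
  define A' where "A' = A \<inter> ball z R"
  have A': "A' \<in> sets lebesgue" unfolding A'_def using A fmeasurableD[OF lmeasurable_ball[of z R]] by (rule sets.Int)
  obtain G where G: "open G" "A' \<subseteq> G" "(G - A') \<in> lmeasurable" "emeasure lebesgue (G - A') < ennreal (\<epsilon> * \<eta> / 2)"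
    using sets_lebesgue_outer_open[OF A', of "\<epsilon> * \<eta> / 2"] eps \<open>\<eta> > 0\<close> by auto
  have mGA: "measure lebesgue (G - A') \<le> \<epsilon> * \<eta> / 2"
  proof -
    have "emeasure lebesgue (G - A') = ennreal (measure lebesgue (G - A'))"
      using G(3) by (simp add: emeasure_eq_measure2)
    then show ?thesis using G(4) eps \<open>\<eta> > 0\<close>
      by (metis ennreal_less_iff less_eq_real_def measure_nonneg)
  qed
  define G' where "G' = G \<inter> ball z R"
  have oG': "open G'" using G(1) by (simp add: G'_def open_Int)
  define K where "K = {i. fst i \<in> S \<and> 0 < snd i \<and> ball (fst i) (snd i) \<subseteq> G' \<and>
                       \<epsilon> * snd i \<le> measure lebesgue (ball (fst i) (snd i) - A)}"
  obtain C where C: "countable C" "C \<subseteq> K"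
     and pw: "pairwise (\<lambda>i j. disjnt (ball (fst i) (snd i)) (ball (fst j) (snd j))) C"
     and negC: "negligible (S - (\<Union>i\<in>C. ball (fst i) (snd i)))"
  proof (rule Vitali_covering_theorem_balls[of S K fst snd])
    fix x and \<delta> :: real assume x: "x \<in> S" and "0 < \<delta>"
    have "x \<in> G'" using x S G(2) by (auto simp: G'_def A'_def)
    then obtain k where k: "k > 0" "ball x k \<subseteq> G'" using oG' open_contains_ball by blast
    obtain r where r: "r > 0" "\<And>d. 0 < d \<and> d \<le> r \<Longrightarrow> \<epsilon> * d \<le> measure lebesgue (ball x d - A)"
      using big[OF x] by blast
    define d where "d = min (min k r) \<delta> / 2"
    have d: "0 < d" "d \<le> r" "d < \<delta>" "d \<le> k" using k r \<open>0 < \<delta>\<close> by (auto simp: d_def)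
    have "(x, d) \<in> K"
      unfolding K_def using x d r(2)[of d] k(2) by (auto simp: subset_iff)
    then show "\<exists>i. i \<in> K \<and> x \<in> ball (fst i) (snd i) \<and> snd i < \<delta>"
      using d by (intro exI[of _ "(x,d)"]) auto
  qed
  have Cb: "\<And>i. i \<in> C \<Longrightarrow> ball (fst i) (snd i) \<subseteq> G' \<and> 0 < snd i \<and>
              \<epsilon> * snd i \<le> measure lebesgue (ball (fst i) (snd i) - A)"
    using C(2) unfolding K_def by blast
  have bm: "ball (fst i) (snd i) \<in> lmeasurable" for i by simp
  have bound: "measure lebesgue (\<Union>i\<in>I. ball (fst i) (snd i)) \<le> \<eta>" if I: "I \<subseteq> C" "finite I" for I
  proof -
    have pwI: "pairwise (\<lambda>i j. disjnt (ball (fst i) (snd i)) (ball (fst j) (snd j))) I"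
      using pw I(1) by (rule pairwise_subset)
    have pwI2: "pairwise (\<lambda>i j. disjnt (ball (fst i) (snd i) - A) (ball (fst j) (snd j) - A)) I"
      using pwI unfolding pairwise_def disjnt_def by blast
    have "measure lebesgue (\<Union>i\<in>I. ball (fst i) (snd i)) = (\<Sum>i\<in>I. measure lebesgue (ball (fst i) (snd i)))"
      by (rule measure_UNION'[OF I(2) _ pwI]) simp
    also have "\<dots> \<le> (\<Sum>i\<in>I. 2 / \<epsilon> * measure lebesgue (ball (fst i) (snd i) - A))"
    proof (rule sum_mono)
      fix i assume iI: "i \<in> I"
      then have "i \<in> C" using I(1) by blast
      then have h: "0 < snd i" "\<epsilon> * snd i \<le> measure lebesgue (ball (fst i) (snd i) - A)"
        using Cb[of i] by blast+
      have "measure lebesgue (ball (fst i) (snd i)) = 2 * snd i"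
        using h(1) by (intro measure_ball_real) simp
      also have "\<dots> \<le> 2 / \<epsilon> * measure lebesgue (ball (fst i) (snd i) - A)"
        using h eps by (simp add: field_simps)
      finally show "measure lebesgue (ball (fst i) (snd i)) \<le> 2 / \<epsilon> * measure lebesgue (ball (fst i) (snd i) - A)" .
    qed
    also have "\<dots> = 2 / \<epsilon> * (\<Sum>i\<in>I. measure lebesgue (ball (fst i) (snd i) - A))"
      by (simp add: sum_distrib_left)
    also have "(\<Sum>i\<in>I. measure lebesgue (ball (fst i) (snd i) - A)) = measure lebesgue (\<Union>i\<in>I. ball (fst i) (snd i) - A)"
    proof (rule measure_UNION'[OF I(2) _ pwI2, symmetric])
      fix i show "ball (fst i) (snd i) - A \<in> lmeasurable" using A by (intro fmeasurable_Diff lmeasurable_ball)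
    qed
    finally have s1: "measure lebesgue (\<Union>i\<in>I. ball (fst i) (snd i)) \<le> 2 / \<epsilon> * measure lebesgue (\<Union>i\<in>I. ball (fst i) (snd i) - A)" .
    have s2: "measure lebesgue (\<Union>i\<in>I. ball (fst i) (snd i) - A) \<le> measure lebesgue (G - A')"
    proof (rule measure_mono_fmeasurable[OF _ _ G(3)])
      show "(\<Union>i\<in>I. ball (fst i) (snd i) - A) \<subseteq> G - A'"
        using Cb I(1) unfolding G'_def A'_def by blast
      show "(\<Union>i\<in>I. ball (fst i) (snd i) - A) \<in> sets lebesgue"
        using A I(2) by (intro sets.finite_UN) auto
    qed
    have "measure lebesgue (\<Union>i\<in>I. ball (fst i) (snd i)) \<le> 2 / \<epsilon> * measure lebesgue (G - A')"
    proof -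
      have "0 \<le> 2 / \<epsilon>" using eps by simp
      then show ?thesis using s1 mult_left_mono[OF s2, of "2/\<epsilon>"] by linarith
    qed
    also have "\<dots> \<le> 2 / \<epsilon> * (\<epsilon> * \<eta> / 2)"
      using mGA eps by (intro mult_left_mono) auto
    also have "\<dots> = \<eta>" using eps by simp
    finally show ?thesis .
  qed
  have Um: "(\<Union>i\<in>C. ball (fst i) (snd i)) \<in> lmeasurable"
    by (rule fmeasurable_UN_bound[OF C(1) _ bound]) auto
  have Ub: "measure lebesgue (\<Union>i\<in>C. ball (fst i) (snd i)) \<le> \<eta>"
    by (rule measure_UN_bound[OF C(1) _ bound]) auto
  let ?T = "(S - (\<Union>i\<in>C. ball (fst i) (snd i))) \<union> (\<Union>i\<in>C. ball (fst i) (snd i))"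
  show "\<exists>T. S \<subseteq> T \<and> T \<in> lmeasurable \<and> measure lebesgue T \<le> \<eta>"
  proof (intro exI conjI)
    show "S \<subseteq> ?T" by blast
    show "?T \<in> lmeasurable" by (rule fmeasurable.Un[OF negligible_imp_measurable[OF negC] Um])
    have "measure lebesgue ?T = measure lebesgue (\<Union>i\<in>C. ball (fst i) (snd i))"
      by (rule measure_negligible_symdiff[OF Um]) (force intro: negligible_subset[OF negC])
    then show "measure lebesgue ?T \<le> \<eta>" using Ub by simp
  qed
qed

lemma density_lemma:
  assumes A: "A \<in> sets lebesgue"
  shows "negligible {x\<in>A. \<not> goodpt A x}"
proof -
  define S where "S = (\<lambda>(n::nat,k::nat). {x \<in> A \<inter> ball 0 (real k). \<exists>r>0. \<forall>d. 0 < d \<and> d \<le> r \<longrightarrow>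
                          inverse (real (Suc n)) * d \<le> measure lebesgue (ball x d - A)})"
  have negS: "negligible (S p)" for p
  proof -
    obtain n k where p: "p = (n,k)" by (cases p)
    show ?thesis unfolding p S_def
      by (rule density_key[OF A, of "inverse (real (Suc n))" _ 0 "real k"]) auto
  qed
  have "{x\<in>A. \<not> goodpt A x} \<subseteq> \<Union>(S ` UNIV)"
  proof
    fix x assume x: "x \<in> {x\<in>A. \<not> goodpt A x}"
    then have "\<not> goodpt A x" by simp
    then obtain e r where er0: "e > 0" "r > 0" and H: "\<forall>d. 0 < d \<and> d \<le> r \<longrightarrow> \<not> measure lebesgue (ball x d - A) < e * d"
      unfolding goodpt_def by blast
    have er: "e > 0" "r > 0" "\<And>d. 0 < d \<and> d \<le> r \<Longrightarrow> e * d \<le> measure lebesgue (ball x d - A)"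
      using er0 H by (auto simp: not_less)
    obtain n where n: "inverse (real (Suc n)) < e" using reals_Archimedean[OF er(1)] by blast
    obtain k where k: "\<bar>x\<bar> < real k" using reals_Archimedean2 by blast
    have m1: "x \<in> A \<inter> ball 0 (real k)" using x k by (simp add: dist_real_def)
    have m2: "\<exists>r>0. \<forall>d. 0 < d \<and> d \<le> r \<longrightarrow> inverse (real (Suc n)) * d \<le> measure lebesgue (ball x d - A)"
    proof (intro exI[of _ r] conjI allI impI)
      show "0 < r" by fact
      fix d assume d: "0 < d \<and> d \<le> r"
      have "inverse (real (Suc n)) * d \<le> e * d" using n d by (intro mult_right_mono) auto
      also have "\<dots> \<le> measure lebesgue (ball x d - A)" using er(3) d by blast
      finally show "inverse (real (Suc n)) * d \<le> measure lebesgue (ball x d - A)" .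
    qed
    have "x \<in> S (n,k)" unfolding S_def using m1 m2 by simp
    then show "x \<in> \<Union>(S ` UNIV)" by blast
  qed
  moreover have "negligible (\<Union>(S ` UNIV))"
    by (rule negligible_countable_Union) (auto intro: negS)
  ultimately show ?thesis by (rule negligible_subset[rotated])
qed

lemma good_nonneg:
  assumes A: "A \<in> sets lebesgue" and nn: "\<not> negligible (A \<inter> U)"
  shows "\<not> negligible {x \<in> A \<inter> U. goodpt A x}"
proof
  assume "negligible {x \<in> A \<inter> U. goodpt A x}"
  moreover have "A \<inter> U \<subseteq> {x \<in> A \<inter> U. goodpt A x} \<union> {x\<in>A. \<not> goodpt A x}" by auto
  ultimately have "negligible (A \<inter> U)"
    using density_lemma[OF A] by (meson negligible_Un negligible_subset)
  then show False using nn by blast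
qed

lemma good_exists:
  assumes A: "A \<in> sets lebesgue" and nn: "\<not> negligible (A \<inter> U)"
  obtains x where "x \<in> A" "x \<in> U" "goodpt A x"
proof -
  have "{x \<in> A \<inter> U. goodpt A x} \<noteq> {}" using good_nonneg[OF A nn] by (metis negligible_empty)
  then show ?thesis using that by blast
qed

lemma ball_not_negligible: assumes "(r::real) > 0" shows "\<not> negligible (ball (x::real) r)"
proof
  assume "negligible (ball x r)"
  then have "measure lebesgue (ball x r) = 0" by (rule negligible_imp_measure0)
  then show False using measure_ball_real[of r x] assms by simp
qed

definition supp :: "real set \<Rightarrow> real set" where
  "supp A = {x. \<forall>r>0. \<not> negligible (A \<inter> ball x r)}"

definition mixed :: "real set \<Rightarrow> real \<Rightarrow> bool" where
  "mixed A x \<longleftrightarrow> (\<forall>p q. p < x \<longrightarrow> x < q \<longrightarrow> 1 \<le> Per A {p<..<q})"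

lemma supp_closed: "closed (supp A)"
  unfolding closed_def open_contains_ball
proof
  fix x assume "x \<in> - supp A"
  then obtain r where r: "r > 0" "negligible (A \<inter> ball x r)" unfolding supp_def by auto
  have "ball x r \<subseteq> - supp A"
  proof
    fix y assume y: "y \<in> ball x r"
    define s where "s = r - dist x y"
    have s: "s > 0" using y by (simp add: s_def)
    have "ball y s \<subseteq> ball x r" unfolding s_def by (rule ball_subset_ball_iff[THEN iffD2]) (simp add: dist_commute)
    then have "negligible (A \<inter> ball y s)" using r(2) by (meson Int_mono negligible_subset order_refl)
    then show "y \<in> - supp A" using s unfolding supp_def by auto
  qed
  then show "\<exists>e>0. ball x e \<subseteq> - supp A" using r by blast
qed

lemma locally_neg:
  assumes "\<And>y. y \<in> S \<Longrightarrow> \<exists>r>0. negligible (A \<inter> ball y r)"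
  shows "negligible (A \<inter> S)"
  unfolding locally_negligible_alt[of "A \<inter> S"]
proof
  fix x assume x: "x \<in> A \<inter> S"
  then obtain r where r: "r > 0" "negligible (A \<inter> ball x r)" using assms by blast
  show "\<exists>U. openin (top_of_set (A \<inter> S)) U \<and> x \<in> U \<and> negligible U"
  proof (intro exI conjI)
    show "openin (top_of_set (A \<inter> S)) ((A \<inter> S) \<inter> ball x r)" by (simp add: openin_open_Int)
    show "x \<in> (A \<inter> S) \<inter> ball x r" using x r by simp
    show "negligible ((A \<inter> S) \<inter> ball x r)" using r(2) by (rule negligible_subset) auto
  qed
qed

lemma neg_diff_supp: "negligible (A - supp A)"
proof -
  have "negligible (A \<inter> - supp A)"
    by (rule locally_neg) (auto simp: supp_def)
  then show ?thesis by (simp add: Diff_eq)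
qed

lemma frontier_mixed:
  assumes A: "A \<in> sets lebesgue" and x: "x \<in> frontier (supp A)"
  shows "mixed A x"
  unfolding mixed_def
proof (intro allI impI)
  fix p q assume pq: "p < x" "x < q"
  define r where "r = min (x - p) (q - x)"
  have r: "r > 0" using pq by (simp add: r_def)
  have br: "ball x r \<subseteq> {p<..<q}" by (auto simp: r_def dist_real_def)
  have xs: "x \<in> supp A" using x frontier_subset_closed[OF supp_closed] by blast
  then have "\<not> negligible (A \<inter> ball x r)" using r unfolding supp_def by blast
  then obtain b where b: "b \<in> ball x r" "goodpt A b" using good_exists[OF A] by metis
  have "x \<notin> interior (supp A)" using x by (simp add: frontier_def)
  then have "\<not> ball x r \<subseteq> supp A" using r by (meson interior_maximal open_ball centre_in_ball subsetD)
  then obtain y where y: "y \<in> ball x r" "y \<notin> supp A" by blast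
  then obtain s where s: "s > 0" "negligible (A \<inter> ball y s)" unfolding supp_def by auto
  define t where "t = min s (r - dist x y)"
  have t: "t > 0" using s y by (simp add: t_def)
  have bt: "ball y t \<subseteq> ball x r"
  proof
    fix z assume "z \<in> ball y t"
    then have "dist y z < r - dist x y" by (simp add: t_def)
    then show "z \<in> ball x r" using dist_triangle[of x z y] by simp
  qed
  have bt2: "ball y t \<subseteq> ball y s" unfolding t_def by (rule subset_ball) simp
  have cA: "- A \<in> sets lebesgue" using A by (metis Compl_eq_Diff_UNIV sets.compl_sets space_borel space_completion space_lborel)
  have "\<not> negligible (- A \<inter> ball y t)"
  proof
    assume "negligible (- A \<inter> ball y t)"
    moreover have "negligible (A \<inter> ball y t)" using s(2) bt2 by (meson Int_mono negligible_subset order_refl)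
    ultimately have "negligible (ball y t)"
      by (metis Int_Un_distrib2 Un_absorb negligible_Un boolean_algebra_class.sup_compl_top inf_top_left)
    then show False using ball_not_negligible[OF t] by blast
  qed
  then obtain c where c: "c \<in> ball y t" "goodpt (- A) c" using good_exists[OF cA] by metis
  show "1 \<le> Per A {p<..<q}"
  proof (rule Per_pair[OF A b(2) c(2)])
    have "b \<in> {p<..<q}" using b(1) br by blast
    moreover have "c \<in> {p<..<q}" using c(1) bt br by blast
    ultimately show "p < b" "b < q" "p < c" "c < q" by auto
  qed
qed

lemma C1c_props:
  assumes "\<phi> \<in> C1c_unit U"
  shows "compact (closure {x. \<phi> x \<noteq> 0})" "closure {x. \<phi> x \<noteq> 0} \<subseteq> U" "\<And>x. \<bar>\<phi> x\<bar> \<le> 1"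
  using assms unfolding C1c_unit_def by auto

lemma integrable_Per:
  assumes "\<phi> \<in> C1c_unit U" "E \<in> sets lebesgue"
  shows "integrable lebesgue (\<lambda>x. indicator E x * deriv \<phi> x)"
proof -
  obtain D where D: "\<And>x. (\<phi> has_real_derivative D x) (at x)" "continuous_on UNIV D" "\<And>x. deriv \<phi> x = D x"
    using C1c_D[OF assms(1)] by blast
  have eq: "deriv \<phi> = D" using D(3) by blast
  have z: "deriv \<phi> x = 0" if "x \<notin> closure {x. \<phi> x \<noteq> 0}" for x
    using deriv_zero_outside[OF that] .
  have m: "(\<lambda>x. \<bar>deriv \<phi> x\<bar>) \<in> borel_measurable borel"
    using D(2) unfolding eq by (intro borel_measurable_continuous_onI continuous_intros)
  have cabs: "continuous_on UNIV (\<lambda>x. \<bar>deriv \<phi> x\<bar>)" unfolding eq using D(2) by (intro continuous_intros)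
  show ?thesis
  proof (rule Bochner_Integration.integrable_bound)
    have "integrable lborel (\<lambda>x. indicator (closure {x. \<phi> x \<noteq> 0}) x *\<^sub>R \<bar>deriv \<phi> x\<bar>)"
      by (rule borel_integrable_compact[OF C1c_props(1)[OF assms(1)]])
         (rule continuous_on_subset[OF cabs subset_UNIV])
    then have "integrable lborel (\<lambda>x. \<bar>deriv \<phi> x\<bar>)"
    proof (rule Bochner_Integration.integrable_cong[THEN iffD1, rotated -1])
      fix x show "indicator (closure {x. \<phi> x \<noteq> 0}) x *\<^sub>R \<bar>deriv \<phi> x\<bar> = \<bar>deriv \<phi> x\<bar>"
        using z[of x] by (cases "x \<in> closure {x. \<phi> x \<noteq> 0}") auto
    qed simp
    then show "integrable lebesgue (\<lambda>x. \<bar>deriv \<phi> x\<bar>)"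
      using m by (simp add: integrable_completion)
    have "deriv \<phi> \<in> borel_measurable lebesgue"
      using borel_measurable_continuous_onI[OF D(2)] unfolding eq by (simp add: measurable_completion)
    then show "(\<lambda>x. indicator E x * deriv \<phi> x) \<in> borel_measurable lebesgue"
      using assms(2) by (intro borel_measurable_times borel_measurable_indicator) auto
    show "AE x in lebesgue. norm (indicator E x * deriv \<phi> x) \<le> norm \<bar>deriv \<phi> x\<bar>"
      by (auto simp: indicator_def)
  qed
qed

lemma C1c_add:
  assumes p1: "\<phi>1 \<in> C1c_unit U1" and p2: "\<phi>2 \<in> C1c_unit U2" and disj: "U1 \<inter> U2 = {}" and sub: "U1 \<union> U2 \<subseteq> U"
  shows "(\<lambda>x. \<phi>1 x + \<phi>2 x) \<in> C1c_unit U" "\<And>x. deriv (\<lambda>x. \<phi>1 x + \<phi>2 x) x = deriv \<phi>1 x + deriv \<phi>2 x"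
proof -
  obtain D1 where D1: "\<And>x. (\<phi>1 has_real_derivative D1 x) (at x)" "continuous_on UNIV D1" "\<And>x. deriv \<phi>1 x = D1 x"
    using C1c_D[OF p1] by blast
  obtain D2 where D2: "\<And>x. (\<phi>2 has_real_derivative D2 x) (at x)" "continuous_on UNIV D2" "\<And>x. deriv \<phi>2 x = D2 x"
    using C1c_D[OF p2] by blast
  have d: "((\<lambda>x. \<phi>1 x + \<phi>2 x) has_real_derivative D1 x + D2 x) (at x)" for x
    by (intro DERIV_add D1 D2)
  then show "deriv (\<lambda>x. \<phi>1 x + \<phi>2 x) x = deriv \<phi>1 x + deriv \<phi>2 x" for x
    using D1(3) D2(3) DERIV_imp_deriv by metis
  let ?S1 = "closure {x. \<phi>1 x \<noteq> 0}" and ?S2 = "closure {x. \<phi>2 x \<noteq> 0}"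
  have z1: "\<phi>1 x = 0" if "x \<notin> ?S1" for x using that closure_subset[of "{x. \<phi>1 x \<noteq> 0}"] by blast
  have z2: "\<phi>2 x = 0" if "x \<notin> ?S2" for x using that closure_subset[of "{x. \<phi>2 x \<noteq> 0}"] by blast
  have "{x. \<phi>1 x + \<phi>2 x \<noteq> 0} \<subseteq> {x. \<phi>1 x \<noteq> 0} \<union> {x. \<phi>2 x \<noteq> 0}" by auto
  then have sub12: "{x. \<phi>1 x + \<phi>2 x \<noteq> 0} \<subseteq> ?S1 \<union> ?S2"
    using closure_subset[of "{x. \<phi>1 x \<noteq> 0}"] closure_subset[of "{x. \<phi>2 x \<noteq> 0}"] by blast
  have cl: "closure {x. \<phi>1 x + \<phi>2 x \<noteq> 0} \<subseteq> ?S1 \<union> ?S2"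
    by (rule closure_minimal[OF sub12]) (intro closed_Un closed_closure)
  have "bounded (?S1 \<union> ?S2)"
    using C1c_props(1)[OF p1] C1c_props(1)[OF p2] by (intro bounded_Un[THEN iffD2] conjI compact_imp_bounded)
  then have "bounded {x. \<phi>1 x + \<phi>2 x \<noteq> 0}" using sub12 bounded_subset by blast
  then have comp: "compact (closure {x. \<phi>1 x + \<phi>2 x \<noteq> 0})" by simp
  have "?S1 \<union> ?S2 \<subseteq> U" using C1c_props(2)[OF p1] C1c_props(2)[OF p2] sub by blast
  then have clU: "closure {x. \<phi>1 x + \<phi>2 x \<noteq> 0} \<subseteq> U" using cl by blast
  have bd: "\<bar>\<phi>1 x + \<phi>2 x\<bar> \<le> 1" for x
  proof (cases "x \<in> ?S1")
    case True
    then have "x \<notin> ?S2" using C1c_props(2)[OF p1] C1c_props(2)[OF p2] disj by blast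
    then show ?thesis using z2[OF \<open>x \<notin> ?S2\<close>] C1c_props(3)[OF p1, of x] by simp
  next
    case False
    then show ?thesis using z1[OF False] C1c_props(3)[OF p2, of x] by simp
  qed
  have "(\<lambda>x. \<phi>1 x + \<phi>2 x) C1_differentiable_on UNIV"
    unfolding C1_differentiable_on_def
  proof (intro exI conjI ballI)
    show "((\<lambda>x. \<phi>1 x + \<phi>2 x) has_vector_derivative D1 x + D2 x) (at x)" for x
      using d[of x] by (simp add: has_real_derivative_iff_has_vector_derivative)
    show "continuous_on UNIV (\<lambda>x. D1 x + D2 x)" using D1(2) D2(2) by (intro continuous_on_add)
  qed
  then show "(\<lambda>x. \<phi>1 x + \<phi>2 x) \<in> C1c_unit U"
    unfolding C1c_unit_def mem_Collect_eq using comp clU bd by blast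
qed

lemma Per_split:
  assumes "a < m" "m < b" and A: "A \<in> sets lebesgue"
  shows "Per A {a<..<m} + Per A {m<..<b} \<le> Per A {a<..<b}"
proof -
  let ?f = "\<lambda>\<phi>. ereal (LINT x|lebesgue. indicator (A \<inter> {a<..<m}) x * deriv \<phi> x)"
  let ?g = "\<lambda>\<phi>. ereal (LINT x|lebesgue. indicator (A \<inter> {m<..<b}) x * deriv \<phi> x)"
  have key: "?f \<phi>1 + ?g \<phi>2 \<le> Per A {a<..<b}" if p1: "\<phi>1 \<in> C1c_unit {a<..<m}" and p2: "\<phi>2 \<in> C1c_unit {m<..<b}" for \<phi>1 \<phi>2
  proof -
    have disj: "{a<..<m} \<inter> {m<..<b} = {}" by auto
    have sub: "{a<..<m} \<union> {m<..<b} \<subseteq> {a<..<b}" using assms by auto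
    note S = C1c_add[OF p1 p2 disj sub]
    have ptw: "indicator (A \<inter> {a<..<b}) x * deriv (\<lambda>x. \<phi>1 x + \<phi>2 x) x =
        indicator (A \<inter> {a<..<m}) x * deriv \<phi>1 x + indicator (A \<inter> {m<..<b}) x * deriv \<phi>2 x" for x
    proof -
      have a1: "indicator (A \<inter> {a<..<b}) x * deriv \<phi>1 x = indicator (A \<inter> {a<..<m}) x * deriv \<phi>1 x"
      proof (cases "x \<in> closure {x. \<phi>1 x \<noteq> 0}")
        case True then have "x \<in> {a<..<m}" using C1c_props(2)[OF p1] by blast
        then show ?thesis using assms by (auto simp: indicator_def)
      next
        case False then show ?thesis using deriv_zero_outside[OF False] by simp
      qed
      have a2: "indicator (A \<inter> {a<..<b}) x * deriv \<phi>2 x = indicator (A \<inter> {m<..<b}) x * deriv \<phi>2 x"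
      proof (cases "x \<in> closure {x. \<phi>2 x \<noteq> 0}")
        case True then have "x \<in> {m<..<b}" using C1c_props(2)[OF p2] by blast
        then show ?thesis using assms by (auto simp: indicator_def)
      next
        case False then show ?thesis using deriv_zero_outside[OF False] by simp
      qed
      show ?thesis unfolding S(2) distrib_left a1 a2 ..
    qed
    have "(LINT x|lebesgue. indicator (A \<inter> {a<..<b}) x * deriv (\<lambda>x. \<phi>1 x + \<phi>2 x) x) =
          (LINT x|lebesgue. indicator (A \<inter> {a<..<m}) x * deriv \<phi>1 x) + (LINT x|lebesgue. indicator (A \<inter> {m<..<b}) x * deriv \<phi>2 x)"
      unfolding ptw
      by (intro Bochner_Integration.integral_add integrable_Per[OF p1] integrable_Per[OF p2] sets.Int A) auto
    then have "?f \<phi>1 + ?g \<phi>2 = ereal (LINT x|lebesgue. indicator (A \<inter> {a<..<b}) x * deriv (\<lambda>x. \<phi>1 x + \<phi>2 x) x)"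
      by simp
    also have "\<dots> \<le> Per A {a<..<b}" by (rule Per_ge[OF S(1)])
    finally show ?thesis .
  qed
  have ne1: "C1c_unit {a<..<m} \<noteq> {}" and ne2: "C1c_unit {m<..<b} \<noteq> {}" using zero_C1c by blast+
  have P2: "Per A {m<..<b} \<noteq> -\<infinity>" using Per_nonneg[of A "{m<..<b}"] by auto
  have "Per A {a<..<m} + Per A {m<..<b} = (SUP \<phi>1\<in>C1c_unit {a<..<m}. ?f \<phi>1 + Per A {m<..<b})"
    unfolding Per_def[of A "{a<..<m}"] by (rule SUP_ereal_add_left[OF ne1 P2, symmetric])
  also have "\<dots> \<le> Per A {a<..<b}"
  proof (rule SUP_least)
    fix \<phi>1 assume p1: "\<phi>1 \<in> C1c_unit {a<..<m}"
    have "?f \<phi>1 + Per A {m<..<b} = (SUP \<phi>2\<in>C1c_unit {m<..<b}. ?f \<phi>1 + ?g \<phi>2)"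
      unfolding Per_def[of A "{m<..<b}"] by (rule SUP_ereal_add_right[OF ne2, symmetric]) simp
    also have "\<dots> \<le> Per A {a<..<b}"
      by (rule SUP_least) (rule key[OF p1])
    finally show "?f \<phi>1 + Per A {m<..<b} \<le> Per A {a<..<b}" .
  qed
  finally show ?thesis .
qed

lemma mixed_count:
  "A \<in> sets lebesgue \<Longrightarrow> finite F \<Longrightarrow> F \<subseteq> {a<..<b} \<Longrightarrow> (\<forall>x\<in>F. mixed A x) \<Longrightarrow>
   ereal (real (card F)) \<le> Per A {a<..<b}"
proof (induction "card F" arbitrary: F b)
  case 0
  then have "F = {}" by simp
  then show ?case using Per_nonneg[of A "{a<..<b}"] by (simp add: zero_ereal_def)
next
  case (Suc n)
  have A: "A \<in> sets lebesgue" and fin: "finite F" and Fs: "F \<subseteq> {a<..<b}" and mx: "\<forall>x\<in>F. mixed A x"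
    using Suc.prems by auto
  have ne: "F \<noteq> {}" using Suc.hyps(2) by auto
  define x where "x = Max F"
  have xF: "x \<in> F" unfolding x_def using fin ne by (rule Max_in)
  define F' where "F' = F - {x}"
  have cF': "card F' = n" using Suc.hyps(2) xF fin by (simp add: F'_def)
  have fF': "finite F'" using fin by (simp add: F'_def)
  define a' where "a' = (if F' = {} then a else Max F')"
  have xab: "a < x" "x < b" using xF Fs by auto
  have a'x: "a' < x \<and> a \<le> a'"
  proof (cases "F' = {}")
    case True then show ?thesis using xab by (simp add: a'_def)
  next
    case False
    have "Max F' \<in> F'" using fF' False by (rule Max_in)
    moreover have "Max F' \<le> x" unfolding x_def using fin \<open>Max F' \<in> F'\<close> by (auto simp: F'_def)
    ultimately show ?thesis using Fs by (auto simp: a'_def F'_def)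
  qed
  define m where "m = (a' + x) / 2"
  have m: "a < m" "m < x" using a'x by (auto simp: m_def)
  have F'sub: "F' \<subseteq> {a<..<m}"
  proof
    fix y assume y: "y \<in> F'"
    then have "F' \<noteq> {}" by auto
    then have "y \<le> a'" using y fF' by (simp add: a'_def)
    then show "y \<in> {a<..<m}" using y Fs a'x by (auto simp: F'_def m_def)
  qed
  have IH: "ereal (real (card F')) \<le> Per A {a<..<m}"
    using Suc.hyps(1)[of F' m] cF' A fF' F'sub mx by (auto simp: F'_def)
  have one: "1 \<le> Per A {m<..<b}" using mx xF m xab unfolding mixed_def by blast
  have "ereal (real (card F)) = ereal (real (card F')) + 1"
    using Suc.hyps(2) cF' by simp
  also have "\<dots> \<le> Per A {a<..<m} + Per A {m<..<b}" using IH one by (rule add_mono)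
  also have "\<dots> \<le> Per A {a<..<b}" using m xab A by (intro Per_split) auto
  finally show ?case .
qed

lemma finite_mixed:
  assumes A: "A \<in> sets lebesgue" and fin: "Per A {a<..<b} < \<infinity>"
  shows "finite ({x. mixed A x} \<inter> {a<..<b})"
proof (rule ccontr)
  assume inf: "infinite ({x. mixed A x} \<inter> {a<..<b})"
  obtain v where v: "Per A {a<..<b} = ereal v" using fin Per_nonneg[of A "{a<..<b}"]
    by (cases "Per A {a<..<b}") auto
  obtain N :: nat where N: "v < real N" using reals_Archimedean2 by blast
  obtain F where F: "finite F" "card F = N" "F \<subseteq> {x. mixed A x} \<inter> {a<..<b}"
    using infinite_arbitrarily_large[OF inf] by blast
  have "ereal (real (card F)) \<le> Per A {a<..<b}" using F A by (intro mixed_count) auto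
  then show False using v N F(2) by simp
qed

lemma finite_frontier:
  assumes A: "A \<in> sets lebesgue" and fin: "Per A {a<..<b} < \<infinity>"
  shows "finite (frontier (supp A) \<inter> {a<..<b})"
proof -
  have "frontier (supp A) \<inter> {a<..<b} \<subseteq> {x. mixed A x} \<inter> {a<..<b}"
    using frontier_mixed[OF A] by blast
  then show ?thesis using finite_mixed[OF A fin] finite_subset by blast
qed

lemma frontier_count_le:
  assumes A: "A \<in> sets lebesgue" and fin: "finite (frontier (supp A) \<inter> {a<..<b})"
  shows "ereal (real (card (frontier (supp A) \<inter> {a<..<b}))) \<le> Per A {a<..<b}"
  using A fin frontier_mixed[OF A] by (intro mixed_count) auto

lemma interior_full:
  assumes A: "A \<in> sets lebesgue" and fin: "\<And>a b. Per A {a<..<b} < \<infinity>" and x: "x \<in> interior (supp A)"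
  shows "\<exists>r>0. negligible (- A \<inter> ball x r)"
proof -
  obtain r where r: "r > 0" "ball x r \<subseteq> supp A" using x by (auto simp: mem_interior)
  have cA: "- A \<in> sets lebesgue" using A by (metis Compl_eq_Diff_UNIV sets.compl_sets space_borel space_completion space_lborel)
  have "negligible (- A \<inter> ball x r)"
  proof (rule ccontr)
    assume nn: "\<not> negligible (- A \<inter> ball x r)"
    let ?G = "{c \<in> - A \<inter> ball x r. goodpt (- A) c}"
    have "\<not> negligible ?G" using good_nonneg[OF cA nn] .
    then have infG: "infinite ?G" using negligible_finite by blast
    have mixG: "mixed A c" if c: "c \<in> ?G" for c
      unfolding mixed_def
    proof (intro allI impI)
      fix p q assume pq: "p < c" "c < q"
      define s where "s = min (min (c - p) (q - c)) (r - dist x c)"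
      have s: "s > 0" using pq c by (auto simp: s_def)
      have cs: "c \<in> supp A" using c r(2) by blast
      then have "\<not> negligible (A \<inter> ball c s)" using s unfolding supp_def by blast
      then obtain b where b: "b \<in> ball c s" "goodpt A b" using good_exists[OF A] by metis
      have "b \<in> {p<..<q}" using b(1) by (auto simp: s_def dist_real_def)
      then show "1 \<le> Per A {p<..<q}"
        using Per_pair[OF A b(2)] c pq by auto
    qed
    have Gsub: "?G \<subseteq> {x. mixed A x} \<inter> {x-r<..<x+r}"
      using mixG by (auto simp: dist_real_def)
    have "finite ({x. mixed A x} \<inter> {x-r<..<x+r})" using finite_mixed[OF A fin] .
    then have "finite ?G" using Gsub finite_subset by blast
    then show False using infG by blast
  qed
  then show ?thesis using r(1) by blast
qed

lemma supp_ae: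
  assumes A: "A \<in> sets lebesgue" and fin: "\<And>a b. Per A {a<..<b} < \<infinity>"
  shows "negligible ((A - supp A) \<union> (supp A - A))"
proof -
  have n1: "negligible (A - supp A)" by (rule neg_diff_supp)
  have "frontier (supp A) = (\<Union>n::nat. frontier (supp A) \<inter> {- real n<..<real n})"
  proof -
    have "\<exists>n::nat. - real n < y \<and> y < real n" for y :: real
    proof -
      obtain n :: nat where "\<bar>y\<bar> < real n" using reals_Archimedean2 by blast
      then show ?thesis by (intro exI[of _ n]) auto
    qed
    then show ?thesis by auto
  qed
  moreover have "negligible (\<Union>n::nat. frontier (supp A) \<inter> {- real n<..<real n})"
    using finite_frontier[OF A fin] by (intro negligible_countable_Union) auto
  ultimately have n2: "negligible (frontier (supp A))" by simp
  have n3: "negligible (- A \<inter> interior (supp A))"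
    using interior_full[OF A fin] by (intro locally_neg) auto
  have "supp A - A \<subseteq> frontier (supp A) \<union> (- A \<inter> interior (supp A))"
    using supp_closed[of A] by (auto simp: frontier_def closure_closed)
  then have "negligible (supp A - A)" using n2 n3 by (meson negligible_Un negligible_subset)
  then show ?thesis using n1 by (rule negligible_Un[rotated])
qed

definition rv :: "real set \<Rightarrow> real \<Rightarrow> bool \<Rightarrow> bool" where
  "rv Z u c \<longleftrightarrow> (\<exists>\<delta>>0. \<forall>y. u < y \<and> y < u + \<delta> \<longrightarrow> (y \<in> Z \<longleftrightarrow> c))"
definition lv :: "real set \<Rightarrow> real \<Rightarrow> bool \<Rightarrow> bool" where
  "lv Z v c \<longleftrightarrow> (\<exists>\<delta>>0. \<forall>y. v - \<delta> < y \<and> y < v \<longrightarrow> (y \<in> Z \<longleftrightarrow> c))"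

lemma const_on:
  fixes u v :: real
  assumes "{u<..<v} \<inter> frontier Z = {}"
  shows "{u<..<v} \<subseteq> Z \<or> {u<..<v} \<inter> Z = {}"
  using connected_Int_frontier[OF connected_Ioo[of u v], of Z] assms by blast

lemma rv_exists:
  assumes fin: "finite (frontier Z \<inter> {u<..<v})" and uv: "u < v"
  obtains c where "rv Z u c"
proof -
  let ?P = "frontier Z \<inter> {u<..<v}"
  define w where "w = (if ?P = {} then v else Min ?P)"
  have uw0: "u < w \<and> w \<le> v"
  proof (cases "?P = {}")
    case True then show ?thesis using uv by (simp add: w_def)
  next
    case False
    have "Min ?P \<in> ?P" using fin False by (rule Min_in)
    then show ?thesis using False by (auto simp: w_def)
  qed
  then have uw: "u < w" "w \<le> v" by auto
  have "{u<..<w} \<inter> frontier Z = {}"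
  proof (rule ccontr)
    assume "{u<..<w} \<inter> frontier Z \<noteq> {}"
    then obtain y where y: "y \<in> {u<..<w}" "y \<in> frontier Z" by blast
    then have yP: "y \<in> ?P" using uw by auto
    then have "?P \<noteq> {}" by blast
    then have "w \<le> y" using Min_le[OF fin yP] by (simp add: w_def)
    then show False using y by auto
  qed
  then have "{u<..<w} \<subseteq> Z \<or> {u<..<w} \<inter> Z = {}" by (rule const_on)
  then show ?thesis
  proof
    assume "{u<..<w} \<subseteq> Z"
    then have "rv Z u True" unfolding rv_def using uw by (intro exI[of _ "w - u"]) auto
    then show ?thesis by (rule that)
  next
    assume "{u<..<w} \<inter> Z = {}"
    then have "rv Z u False" unfolding rv_def using uw by (intro exI[of _ "w - u"]) auto
    then show ?thesis by (rule that)
  qed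
qed

lemma lv_exists:
  assumes fin: "finite (frontier Z \<inter> {u<..<v})" and uv: "u < v"
  obtains c where "lv Z v c"
proof -
  let ?P = "frontier Z \<inter> {u<..<v}"
  define w where "w = (if ?P = {} then u else Max ?P)"
  have uw0: "w < v \<and> u \<le> w"
  proof (cases "?P = {}")
    case True then show ?thesis using uv by (simp add: w_def)
  next
    case False
    have "Max ?P \<in> ?P" using fin False by (rule Max_in)
    then show ?thesis using False by (auto simp: w_def)
  qed
  then have uw: "w < v" "u \<le> w" by auto
  have "{w<..<v} \<inter> frontier Z = {}"
  proof (rule ccontr)
    assume "{w<..<v} \<inter> frontier Z \<noteq> {}"
    then obtain y where y: "y \<in> {w<..<v}" "y \<in> frontier Z" by blast
    then have yP: "y \<in> ?P" using uw by auto
    then have "?P \<noteq> {}" by blast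
    then have "y \<le> w" using Max_ge[OF fin yP] by (simp add: w_def)
    then show False using y by auto
  qed
  then have "{w<..<v} \<subseteq> Z \<or> {w<..<v} \<inter> Z = {}" by (rule const_on)
  then show ?thesis
  proof
    assume "{w<..<v} \<subseteq> Z"
    then have "lv Z v True" unfolding lv_def using uw by (intro exI[of _ "v - w"]) auto
    then show ?thesis by (rule that)
  next
    assume "{w<..<v} \<inter> Z = {}"
    then have "lv Z v False" unfolding lv_def using uw by (intro exI[of _ "v - w"]) auto
    then show ?thesis by (rule that)
  qed
qed

lemma rv_val:
  assumes "rv Z u c" "u < v"
  obtains y where "u < y" "y < v" "y \<in> Z \<longleftrightarrow> c"
proof -
  obtain \<delta> where d: "\<delta> > 0" "\<forall>y. u < y \<and> y < u + \<delta> \<longrightarrow> (y \<in> Z \<longleftrightarrow> c)" using assms(1) unfolding rv_def by blast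
  define y where "y = u + min \<delta> (v - u) / 2"
  have "u < y" "y < v" "y < u + \<delta>" using d(1) assms(2) by (auto simp: y_def min_def field_simps)
  then show ?thesis using d(2) that by blast
qed

lemma lv_val:
  assumes "lv Z v c" "u < v"
  obtains y where "u < y" "y < v" "y \<in> Z \<longleftrightarrow> c"
proof -
  obtain \<delta> where d: "\<delta> > 0" "\<forall>y. v - \<delta> < y \<and> y < v \<longrightarrow> (y \<in> Z \<longleftrightarrow> c)" using assms(1) unfolding lv_def by blast
  define y where "y = v - min \<delta> (v - u) / 2"
  have "u < y" "y < v" "v - \<delta> < y" using d(1) assms(2) by (auto simp: y_def min_def field_simps)
  then show ?thesis using d(2) that by blast
qed

lemma closed_leb: "closed (Z::real set) \<Longrightarrow> Z \<in> sets lebesgue"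
  by (intro sets_completionI_sets) (simp add: borel_closed)

lemma integrable_bdd:
  fixes g :: "real \<Rightarrow> real"
  assumes E: "E \<in> sets lebesgue" "E \<subseteq> {l..r}" and g: "continuous_on UNIV g"
  shows "integrable lebesgue (\<lambda>x. indicator E x * g x)"
proof (rule Bochner_Integration.integrable_bound)
  have "integrable lborel (\<lambda>x. indicator {l..r} x *\<^sub>R \<bar>g x\<bar>)"
    by (rule borel_integrable_compact) (auto intro!: continuous_intros continuous_on_subset[OF g])
  moreover have "(\<lambda>x. indicator {l..r} x *\<^sub>R \<bar>g x\<bar>) \<in> borel_measurable borel"
    using borel_measurable_continuous_onI[OF g]
    by (intro borel_measurable_scaleR borel_measurable_indicator borel_measurable_abs) auto
  ultimately show "integrable lebesgue (\<lambda>x. indicator {l..r} x *\<^sub>R \<bar>g x\<bar>)"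
    by (simp add: integrable_completion)
  have "g \<in> borel_measurable lebesgue"
    using borel_measurable_continuous_onI[OF g] by (simp add: measurable_completion)
  then show "(\<lambda>x. indicator E x * g x) \<in> borel_measurable lebesgue"
    using E by (intro borel_measurable_times borel_measurable_indicator) auto
  show "AE x in lebesgue. norm (indicator E x * g x) \<le> norm (indicator {l..r} x *\<^sub>R \<bar>g x\<bar>)"
  proof (rule AE_I2)
    fix x show "norm (indicator E x * g x) \<le> norm (indicator {l..r} x *\<^sub>R \<bar>g x\<bar>)"
      using E(2) by (cases "x \<in> E") (auto simp: indicator_def)
  qed
qed

lemma open_leb: "open (S::real set) \<Longrightarrow> S \<in> sets lebesgue"
  by (intro sets_completionI_sets) (simp add: borel_open)

lemma inv_lemma:
  fixes \<phi> D :: "real \<Rightarrow> real" and Z :: "real set"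
  assumes d: "\<And>x. (\<phi> has_real_derivative D x) (at x)" and cD: "continuous_on UNIV D"
    and bd: "\<And>x. \<bar>\<phi> x\<bar> \<le> 1" and Zc: "closed Z"
  shows "\<forall>u v c1 c2. card (frontier Z \<inter> {u<..<v}) = n \<longrightarrow> finite (frontier Z \<inter> {u<..<v}) \<longrightarrow> u < v \<longrightarrow>
    rv Z u c1 \<longrightarrow> lv Z v c2 \<longrightarrow>
    (LINT x|lebesgue. indicator (Z \<inter> {u<..<v}) x * D x) \<le> real n + of_bool c2 * \<phi> v - of_bool c1 * \<phi> u"
proof (induction n rule: less_induct)
  case (less n)
  have ZI: "Z \<inter> {a<..<b} \<in> sets lebesgue" for a b
    by (intro sets.Int closed_leb[OF Zc] open_leb) auto
  have intI: "integrable lebesgue (\<lambda>x. indicator (Z \<inter> {a<..<b}) x * D x)" for a b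
    by (rule integrable_bdd[OF ZI _ cD, of a b a b]) auto
  show ?case
  proof (intro allI impI)
    fix u v c1 c2
    assume cn: "card (frontier Z \<inter> {u<..<v}) = n" and fin: "finite (frontier Z \<inter> {u<..<v})" and uv: "u < v"
      and r1: "rv Z u c1" and l2: "lv Z v c2"
    let ?P = "frontier Z \<inter> {u<..<v}"
    show "(LINT x|lebesgue. indicator (Z \<inter> {u<..<v}) x * D x) \<le> real n + of_bool c2 * \<phi> v - of_bool c1 * \<phi> u"
    proof (cases "?P = {}")
      case True
      then have n0: "n = 0" using cn by simp
      have "{u<..<v} \<inter> frontier Z = {}" using True by auto
      then have "{u<..<v} \<subseteq> Z \<or> {u<..<v} \<inter> Z = {}" by (rule const_on)
      then show ?thesis
      proof
        assume sub: "{u<..<v} \<subseteq> Z"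
        obtain y1 where y1: "u < y1" "y1 < v" "y1 \<in> Z \<longleftrightarrow> c1" using rv_val[OF r1 uv] by blast
        with sub have c1: c1 by auto
        obtain y2 where y2: "u < y2" "y2 < v" "y2 \<in> Z \<longleftrightarrow> c2" using lv_val[OF l2 uv] by blast
        with sub have c2: c2 by auto
        have "Z \<inter> {u<..<v} = {u<..<v}" using sub by auto
        then have "(LINT x|lebesgue. indicator (Z \<inter> {u<..<v}) x * D x) = \<phi> v - \<phi> u"
          using FTC_leb[OF d cD, of u v] uv by simp
        then show ?thesis using c1 c2 n0 by simp
      next
        assume dis: "{u<..<v} \<inter> Z = {}"
        obtain y1 where y1: "u < y1" "y1 < v" "y1 \<in> Z \<longleftrightarrow> c1" using rv_val[OF r1 uv] by blast
        with dis have c1: "\<not> c1" by auto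
        obtain y2 where y2: "u < y2" "y2 < v" "y2 \<in> Z \<longleftrightarrow> c2" using lv_val[OF l2 uv] by blast
        with dis have c2: "\<not> c2" by auto
        have "Z \<inter> {u<..<v} = {}" using dis by auto
        then show ?thesis using c1 c2 n0 by simp
      qed
    next
      case False
      then obtain x where xP: "x \<in> ?P" by blast
      then have ux: "u < x" "x < v" by auto
      let ?P1 = "frontier Z \<inter> {u<..<x}" and ?P2 = "frontier Z \<inter> {x<..<v}"
      have s1: "?P1 \<subset> ?P" using xP ux by auto
      have s2: "?P2 \<subset> ?P" using xP ux by auto
      have f1: "finite ?P1" using fin s1 by (meson finite_subset psubset_imp_subset)
      have f2: "finite ?P2" using fin s2 by (meson finite_subset psubset_imp_subset)
      have lt1: "card ?P1 < n" using psubset_card_mono[OF fin s1] cn by simp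
      have lt2: "card ?P2 < n" using psubset_card_mono[OF fin s2] cn by simp
      obtain cL where cL: "lv Z x cL" using lv_exists[OF f1 ux(1)] by blast
      obtain cR where cR: "rv Z x cR" using rv_exists[OF f2 ux(2)] by blast
      have IH1: "(LINT y|lebesgue. indicator (Z \<inter> {u<..<x}) y * D y) \<le> real (card ?P1) + of_bool cL * \<phi> x - of_bool c1 * \<phi> u"
        using less[OF lt1] f1 ux(1) r1 cL by blast
      have IH2: "(LINT y|lebesgue. indicator (Z \<inter> {x<..<v}) y * D y) \<le> real (card ?P2) + of_bool c2 * \<phi> v - of_bool cR * \<phi> x"
        using less[OF lt2] f2 ux(2) cR l2 by blast
      have Peq: "?P = insert x (?P1 \<union> ?P2)" using xP by auto
      have "card ?P = Suc (card ?P1 + card ?P2)"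
        unfolding Peq using f1 f2 by (subst card_insert_disjoint) (auto intro: card_Un_disjoint)
      then have ncard: "real n = real (card ?P1) + real (card ?P2) + 1" using cn by simp
      have split: "(LINT y|lebesgue. indicator (Z \<inter> {u<..<v}) y * D y) =
          (LINT y|lebesgue. indicator (Z \<inter> {u<..<x}) y * D y + indicator (Z \<inter> {x<..<v}) y * D y)"
      proof (rule integral_cong_AE)
        show "(\<lambda>y. indicator (Z \<inter> {u<..<v}) y * D y) \<in> borel_measurable lebesgue"
          using intI by (rule borel_measurable_integrable)
        show "(\<lambda>y. indicator (Z \<inter> {u<..<x}) y * D y + indicator (Z \<inter> {x<..<v}) y * D y) \<in> borel_measurable lebesgue"
          using Bochner_Integration.integrable_add[OF intI intI] by (rule borel_measurable_integrable)
        have "AE y in lebesgue. y \<noteq> x" using AE_completion[OF AE_lborel_singleton] .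
        then show "AE y in lebesgue. indicator (Z \<inter> {u<..<v}) y * D y = indicator (Z \<inter> {u<..<x}) y * D y + indicator (Z \<inter> {x<..<v}) y * D y"
        proof (rule eventually_mono)
          fix y assume "y \<noteq> x"
          then show "indicator (Z \<inter> {u<..<v}) y * D y = indicator (Z \<inter> {u<..<x}) y * D y + indicator (Z \<inter> {x<..<v}) y * D y"
            using ux by (auto simp: indicator_def)
        qed
      qed
      also have "\<dots> = (LINT y|lebesgue. indicator (Z \<inter> {u<..<x}) y * D y) + (LINT y|lebesgue. indicator (Z \<inter> {x<..<v}) y * D y)"
        by (rule Bochner_Integration.integral_add[OF intI intI])
      finally have sp: "(LINT y|lebesgue. indicator (Z \<inter> {u<..<v}) y * D y) =
          (LINT y|lebesgue. indicator (Z \<inter> {u<..<x}) y * D y) + (LINT y|lebesgue. indicator (Z \<inter> {x<..<v}) y * D y)" .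
      have jump: "of_bool cL * \<phi> x - of_bool cR * \<phi> x \<le> 1"
        using bd[of x] by (cases cL; cases cR) auto
      show ?thesis using sp IH1 IH2 ncard jump by linarith
    qed
  qed
qed

lemma UB:
  assumes A: "A \<in> sets lebesgue" and ae: "negligible ((A - supp A) \<union> (supp A - A))"
    and fin: "finite (frontier (supp A) \<inter> {a<..<b})" and ab: "a < b"
  shows "Per A {a<..<b} \<le> ereal (real (card (frontier (supp A) \<inter> {a<..<b})))"
proof (rule Per_le)
  fix \<phi> assume p: "\<phi> \<in> C1c_unit {a<..<b}"
  obtain D where D: "\<And>x. (\<phi> has_real_derivative D x) (at x)" "continuous_on UNIV D" "\<And>x. deriv \<phi> x = D x"
    using C1c_D[OF p] by blast
  let ?Z = "supp A"
  have Zc: "closed ?Z" by (rule supp_closed)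
  have ZI: "?Z \<inter> {a<..<b} \<in> sets lebesgue"
    by (intro sets.Int closed_leb[OF Zc] open_leb) auto
  have eqI: "(LINT x|lebesgue. indicator (A \<inter> {a<..<b}) x * deriv \<phi> x) = (LINT x|lebesgue. indicator (?Z \<inter> {a<..<b}) x * D x)"
  proof (rule integral_cong_AE)
    show "(\<lambda>x. indicator (A \<inter> {a<..<b}) x * deriv \<phi> x) \<in> borel_measurable lebesgue"
    proof (rule borel_measurable_integrable[OF integrable_Per[OF p]])
      show "A \<inter> {a<..<b} \<in> sets lebesgue" using A open_leb[of "{a<..<b}"] by (intro sets.Int) auto
    qed
    show "(\<lambda>x. indicator (?Z \<inter> {a<..<b}) x * D x) \<in> borel_measurable lebesgue"
      by (rule borel_measurable_integrable[OF integrable_bdd[OF ZI _ D(2), of a b]]) auto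
    have "(A - ?Z) \<union> (?Z - A) \<in> null_sets lebesgue" using ae negligible_iff_null_sets by blast
    from AE_not_in[OF this]
    show "AE x in lebesgue. indicator (A \<inter> {a<..<b}) x * deriv \<phi> x = indicator (?Z \<inter> {a<..<b}) x * D x"
      by eventually_elim (auto simp: indicator_def D(3))
  qed
  obtain c1 where r1: "rv ?Z a c1" using rv_exists[OF fin ab] by blast
  obtain c2 where l2: "lv ?Z b c2" using lv_exists[OF fin ab] by blast
  have le: "(LINT x|lebesgue. indicator (?Z \<inter> {a<..<b}) x * D x) \<le>
      real (card (frontier ?Z \<inter> {a<..<b})) + of_bool c2 * \<phi> b - of_bool c1 * \<phi> a"
    using inv_lemma[OF D(1) D(2) C1c_props(3)[OF p] Zc] fin ab r1 l2 by blast
  have "a \<notin> closure {x. \<phi> x \<noteq> 0}" "b \<notin> closure {x. \<phi> x \<noteq> 0}" using C1c_props(2)[OF p] by auto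
  then have "\<phi> a = 0" "\<phi> b = 0" using closure_subset[of "{x. \<phi> x \<noteq> 0}"] by auto
  then show "ereal (LINT x|lebesgue. indicator (A \<inter> {a<..<b}) x * deriv \<phi> x) \<le> ereal (real (card (frontier ?Z \<inter> {a<..<b})))"
    using le eqI by simp
qed

lemma det:
  assumes A: "A \<in> sets lebesgue" and fp: "\<forall>V. bounded V \<and> open V \<longrightarrow> Per A V < \<infinity>"
  shows "\<forall>a b. a < b \<longrightarrow> emeasure lebesgue ((A - supp A) \<union> (supp A - A)) = 0 \<and>
       Per A {a<..<b} = enn2ereal (emeasure (count_space UNIV) (frontier (supp A) \<inter> {a<..<b}))"
proof (intro allI impI conjI)
  have fin: "Per A {a<..<b} < \<infinity>" for a b using fp by auto
  have ae: "negligible ((A - supp A) \<union> (supp A - A))" by (rule supp_ae[OF A fin])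
  then show "emeasure lebesgue ((A - supp A) \<union> (supp A - A)) = 0"
    using negligible_iff_null_sets null_setsD1 by blast
  fix a b :: real assume ab: "a < b"
  have ff: "finite (frontier (supp A) \<inter> {a<..<b})" by (rule finite_frontier[OF A fin])
  have "emeasure (count_space UNIV) (frontier (supp A) \<inter> {a<..<b}) = of_nat (card (frontier (supp A) \<inter> {a<..<b}))"
    using ff by simp
  then show "Per A {a<..<b} = enn2ereal (emeasure (count_space UNIV) (frontier (supp A) \<inter> {a<..<b}))"
    using frontier_count_le[OF A ff] UB[OF A ae ff ab] by simp
qed

definition thick :: "real set \<Rightarrow> nat \<Rightarrow> real set" where
  "thick K n = (\<Union>x\<in>K. ball x (inverse (real (Suc n))))"

lemma thick_open: "open (thick K n)" unfolding thick_def by (intro open_UN) auto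

lemma thick_bounded: assumes "compact K" shows "\<exists>N::nat. thick K n \<subseteq> {- real N..real N}"
proof -
  obtain R where R: "\<And>x. x \<in> K \<Longrightarrow> \<bar>x\<bar> \<le> R"
    using compact_imp_bounded[OF assms] unfolding bounded_real by blast
  obtain N :: nat where N: "R + 1 < real N" using reals_Archimedean2 by blast
  have "inverse (real (Suc n)) \<le> 1" by (simp add: inverse_le_1_iff)
  then have "thick K n \<subseteq> {- real N..real N}"
    unfolding thick_def using R N by (fastforce simp: dist_real_def abs_less_iff abs_le_iff)
  then show ?thesis by blast
qed

lemma supp_meets_iff:
  assumes K: "compact K"
  shows "supp A \<inter> K \<noteq> {} \<longleftrightarrow> (\<forall>n. \<not> negligible (A \<inter> thick K n))"
proof
  assume "supp A \<inter> K \<noteq> {}"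
  then obtain x where x: "x \<in> supp A" "x \<in> K" by blast
  show "\<forall>n. \<not> negligible (A \<inter> thick K n)"
  proof
    fix n
    have "inverse (real (Suc n)) > 0" by simp
    then have "\<not> negligible (A \<inter> ball x (inverse (real (Suc n))))" using x(1) unfolding supp_def by blast
    moreover have "A \<inter> ball x (inverse (real (Suc n))) \<subseteq> A \<inter> thick K n" using x(2) unfolding thick_def by blast
    ultimately show "\<not> negligible (A \<inter> thick K n)" using negligible_subset by blast
  qed
next
  assume H: "\<forall>n. \<not> negligible (A \<inter> thick K n)"
  show "supp A \<inter> K \<noteq> {}"
  proof
    assume empty: "supp A \<inter> K = {}"
    let ?G = "{ball x r | x r. r > 0 \<and> negligible (A \<inter> ball x r)}"
    have "K \<subseteq> \<Union>?G"
    proof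
      fix x assume "x \<in> K"
      then have "x \<notin> supp A" using empty by blast
      then obtain r where r: "r > 0" "negligible (A \<inter> ball x r)" unfolding supp_def by blast
      have "ball x r \<in> ?G" using r by blast
      moreover have "x \<in> ball x r" using r(1) by simp
      ultimately show "x \<in> \<Union>?G" by (rule UnionI)
    qed
    moreover have opG: "\<And>G. G \<in> ?G \<Longrightarrow> open G" by auto
    ultimately obtain \<epsilon> where e: "0 < \<epsilon>" "\<And>x. x \<in> K \<Longrightarrow> \<exists>G \<in> ?G. ball x \<epsilon> \<subseteq> G"
      by (rule Heine_Borel_lemma[OF K]) blast+
    obtain n where n: "inverse (real (Suc n)) < \<epsilon>" using reals_Archimedean[OF e(1)] by blast
    have "negligible (A \<inter> thick K n)"
    proof (rule locally_neg)
      fix y assume "y \<in> thick K n"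
      then obtain x where x: "x \<in> K" "dist x y < inverse (real (Suc n))" unfolding thick_def by auto
      then have yb: "y \<in> ball x \<epsilon>" using n by simp
      obtain G where G: "G \<in> ?G" "ball x \<epsilon> \<subseteq> G" using e(2)[OF x(1)] by blast
      then obtain x' r where G': "G = ball x' r" "negligible (A \<inter> ball x' r)" by blast
      have "y \<in> G" using yb G(2) by blast
      then have "y \<in> ball x' r" using G'(1) by simp
      then obtain s where s: "s > 0" "ball y s \<subseteq> ball x' r" by (rule openE[OF open_ball])
      have "A \<inter> ball y s \<subseteq> A \<inter> ball x' r" using s(2) by blast
      then have "negligible (A \<inter> ball y s)" using G'(2) negligible_subset by blast
      then show "\<exists>r>0. negligible (A \<inter> ball y r)" using s(1) by blast
    qed
    then show False using H by blast
  qed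
qed

lemma W_open:
  assumes K: "compact K"
  shows "loc_meas_open {B \<in> sets lebesgue. \<not> negligible (B \<inter> thick K n)}"
  unfolding loc_meas_open_def
proof (intro conjI ballI)
  show "{B \<in> sets lebesgue. \<not> negligible (B \<inter> thick K n)} \<subseteq> sets lebesgue" by blast
  fix B0 assume B0: "B0 \<in> {B \<in> sets lebesgue. \<not> negligible (B \<inter> thick K n)}"
  obtain N :: nat where N: "thick K n \<subseteq> {- real N..real N}" using thick_bounded[OF K] by blast
  have tm: "thick K n \<in> sets lebesgue" using open_leb[OF thick_open] .
  have B0m: "B0 \<inter> thick K n \<in> lmeasurable"
  proof (rule fmeasurableI2[of "{- real N..real N}"])
    show "{- real N..real N} \<in> lmeasurable" by simp
    show "B0 \<inter> thick K n \<subseteq> {- real N..real N}" using N by blast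
    show "B0 \<inter> thick K n \<in> sets lebesgue" using B0 tm by auto
  qed
  define e where "e = measure lebesgue (B0 \<inter> thick K n)"
  have e: "e > 0"
  proof -
    have "e \<noteq> 0" using B0 negligible_iff_measure0[OF B0m] by (simp add: e_def)
    then show ?thesis by (simp add: e_def order_less_le)
  qed
  have eB0: "emeasure lebesgue (B0 \<inter> thick K n) = ennreal e"
    using B0m by (simp add: e_def emeasure_eq_measure2)
  show "\<exists>n'::nat. \<exists>e>0. \<forall>B\<in>sets lebesgue.
        emeasure lebesgue (((B0 - B) \<union> (B - B0)) \<inter> {- real n' .. real n'}) < ennreal e \<longrightarrow>
        B \<in> {B \<in> sets lebesgue. \<not> negligible (B \<inter> thick K n)}"
  proof (intro exI[of _ N] exI[of _ e] conjI ballI impI)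
    show "0 < e" by fact
    fix B assume Bm: "B \<in> sets lebesgue"
      and small: "emeasure lebesgue (((B0 - B) \<union> (B - B0)) \<inter> {- real N .. real N}) < ennreal e"
    have "\<not> negligible (B \<inter> thick K n)"
    proof
      assume negB: "negligible (B \<inter> thick K n)"
      have z: "emeasure lebesgue (B \<inter> thick K n) = 0"
        using negB negligible_iff_null_sets null_setsD1 by blast
      have D: "((B0 - B) \<union> (B - B0)) \<inter> {- real N .. real N} \<in> sets lebesgue"
        using B0 Bm by auto
      have "B0 \<inter> thick K n \<subseteq> (B \<inter> thick K n) \<union> (((B0 - B) \<union> (B - B0)) \<inter> {- real N .. real N})"
        using N by blast
      then have "emeasure lebesgue (B0 \<inter> thick K n) \<le> emeasure lebesgue ((B \<inter> thick K n) \<union> (((B0 - B) \<union> (B - B0)) \<inter> {- real N .. real N}))"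
        using Bm tm D by (intro emeasure_mono) auto
      also have "\<dots> \<le> emeasure lebesgue (B \<inter> thick K n) + emeasure lebesgue (((B0 - B) \<union> (B - B0)) \<inter> {- real N .. real N})"
        using Bm tm D by (intro emeasure_subadditive) auto
      also have "\<dots> < ennreal e" using z small by simp
      finally show False using eB0 by simp
    qed
    then show "B \<in> {B \<in> sets lebesgue. \<not> negligible (B \<inter> thick K n)}" using Bm by blast
  qed
qed

lemma space_lms: "space loc_meas_space = sets lebesgue"
  unfolding loc_meas_space_def by (rule space_measure_of_conv)

lemma W_sets:
  assumes K: "compact K"
  shows "{B \<in> sets lebesgue. \<not> negligible (B \<inter> thick K n)} \<in> sets loc_meas_space"
  unfolding loc_meas_space_def
proof (rule in_measure_of)
  show "{U. loc_meas_open U} \<subseteq> Pow (sets lebesgue)" by (auto simp: loc_meas_open_def)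
  show "{B \<in> sets lebesgue. \<not> negligible (B \<inter> thick K n)} \<in> {U. loc_meas_open U}"
    using W_open[OF K] by simp
qed

theorem proposition2p8:
  fixes M :: "'a measure" and X :: "'a \<Rightarrow> real set"
  assumes "prob_space M"
    and "complete_measure M"
    and "random_measurable_set M X"
    and "AE \<omega> in M. \<forall>V. bounded V \<and> open V \<longrightarrow> Per (X \<omega>) V < \<infinity>"
  shows "\<exists>Z. random_closed_set M Z \<and>
    (AE \<omega> in M. \<forall>a b. a < b \<longrightarrow>
       emeasure lebesgue ((X \<omega> - Z \<omega>) \<union> (Z \<omega> - X \<omega>)) = 0 \<and>
       Per (X \<omega>) {a<..<b} = enn2ereal (emeasure (count_space UNIV) (frontier (Z \<omega>) \<inter> {a<..<b})))"
proof (intro exI conjI)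
  have Xm: "X \<in> M \<rightarrow>\<^sub>M loc_meas_space" using assms(3) unfolding random_measurable_set_def .
  have Xs: "X \<omega> \<in> sets lebesgue" if "\<omega> \<in> space M" for \<omega>
    using measurable_space[OF Xm that] by (simp add: space_lms)
  show "random_closed_set M (\<lambda>\<omega>. supp (X \<omega>))"
    unfolding random_closed_set_def
  proof (intro conjI allI impI ballI)
    fix \<omega> show "closed (supp (X \<omega>))" by (rule supp_closed)
  next
    fix K :: "real set" assume K: "compact K"
    have "{\<omega> \<in> space M. supp (X \<omega>) \<inter> K \<noteq> {}} =
          (\<Inter>n\<in>UNIV. X -` {B \<in> sets lebesgue. \<not> negligible (B \<inter> thick K n)} \<inter> space M)"
      using supp_meets_iff[OF K] Xs by auto
    also have "\<dots> \<in> sets M"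
    proof (rule sets.countable_INT')
      show "countable (UNIV :: nat set)" by simp
      show "(UNIV :: nat set) \<noteq> {}" by simp
      show "(\<lambda>n. X -` {B \<in> sets lebesgue. \<not> negligible (B \<inter> thick K n)} \<inter> space M) ` UNIV \<subseteq> sets M"
        using measurable_sets[OF Xm W_sets[OF K]] by blast
    qed
    finally show "{\<omega> \<in> space M. supp (X \<omega>) \<inter> K \<noteq> {}} \<in> sets M" .
  qed
  show "AE \<omega> in M. \<forall>a b. a < b \<longrightarrow>
       emeasure lebesgue ((X \<omega> - supp (X \<omega>)) \<union> (supp (X \<omega>) - X \<omega>)) = 0 \<and>
       Per (X \<omega>) {a<..<b} = enn2ereal (emeasure (count_space UNIV) (frontier (supp (X \<omega>)) \<inter> {a<..<b}))"
    using assms(4) AE_space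
  proof eventually_elim
    case (elim \<omega>)
    then show ?case using det[OF Xs] by blast
  qed
qed

end
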